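(* Let $\mathbf{J}\in\mathbb{R}^{n\times p}$, $\mathbf{J}_1\in\mathbb{R}^{n\times q_1}$, $\mathbf{J}_2\in\mathbb{R}^{n\times q_2}$, $\mathbf{K}=\mathbf{J}\mathbf{J}^{\top}$ positive definite, $\mathbf{S}_l=\mathbf{J}_l\mathbf{J}_l^{\top}$ for $l\in\{1,2\}$, $\sigma>0$, and $\mathbf{Y}\in\mathbb{R}^n\setminus\{0\}$. For $l\in\{1,2\}$ define $\mathcal{R}(\boldsymbol{\theta}\cup\hat{\boldsymbol{\theta}}^l)=\|\mathbf{Y}-(\mathbf{K}+\mathbf{S}_l)(\mathbf{K}+\mathbf{S}_l+\sigma\mathbf{I})^{-1}\mathbf{Y}\|^2$, $\eta_l=\|\mathbf{K}^{-1/2}\mathbf{S}_l\mathbf{K}^{-1/2}\|$, and assume $\eta_l<1$. If $\kappa(\mathbf{K}+\sigma\mathbf{I})\le c$, then with $a_l=\frac{c}{(1-\eta_l)^2}$ and $b=a_1a_2$, $$\frac{\lambda_{\max}(\mathbf{K}+\mathbf{S}_1+\sigma\mathbf{I})}{b\,\lambda_{\max}(\mathbf{K}+\mathbf{S}_2+\sigma\mathbf{I})}\le\left(\frac{\mathcal{R}(\boldsymbol{\theta}\cup\hat{\boldsymbol{\theta}}^1)}{\mathcal{R}(\boldsymbol{\theta}\cup\hat{\boldsymbol{\theta}}^2)}\right)^{1/2}\le\frac{b\,\lambda_{\max}(\mathbf{K}+\mathbf{S}_1+\sigma\mathbf{I})}{\lambda_{\max}(\mathbf{K}+\mathbf{S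}_2+\sigma\mathbf{I})}.$$
   Context: $\kappa(\mathbf{A})=\lambda_{\max}(\mathbf{A})/\lambda_{\min}(\mathbf{A})$ is the condition number; matrix norms are spectral norms. In the application, $\mathbf{K}$ is the neural tangent kernel on training inputs induced by the currently trainable parameters $\boldsymbol{\theta}$, and $\mathbf{S}_l$ is the kernel induced by candidate layer parameters $\hat{\boldsymbol{\theta}}^l$, $[\mathbf{S}_l]_{ij}=\nabla_{\hat{\boldsymbol{\theta}}^l}f(\mathbf{x}_i)\nabla_{\hat{\boldsymbol{\theta}}^l}f(\mathbf{x}_j)^{\top}$; $\mathcal{R}(\boldsymbol{\theta}\cup\hat{\boldsymbol{\theta}}^l)$ is the training squared residual of NTK kernel ridge regression with regularization $\sigma$ using kernel $\mathbf{K}+\mathbf{S}_l$. *)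

theory Defs
  imports "HOL-Analysis.Analysis"
begin

definition eigenvalues :: "real^'n^'n \<Rightarrow> real set" where
  "eigenvalues A = {e. \<exists>v. v \<noteq> 0 \<and> A *v v = e *\<^sub>R v}"

definition lambda_max :: "real^'n^'n \<Rightarrow> real" where
  "lambda_max A = Max (eigenvalues A)"

definition lambda_min :: "real^'n^'n \<Rightarrow> real" where
  "lambda_min A = Min (eigenvalues A)"

definition cond_num :: "real^'n^'n \<Rightarrow> real" where
  "cond_num A = lambda_max A / lambda_min A"

definition pos_def :: "real^'n^'n \<Rightarrow> bool" where
  "pos_def A \<longleftrightarrow> transpose A = A \<and> (\<forall>x. x \<noteq> 0 \<longrightarrow> x \<bullet> (A *v x) > 0)"

definition pos_semidef :: "real^'n^'n \<Rightarrow> bool" where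
  "pos_semidef A \<longleftrightarrow> transpose A = A \<and> (\<forall>x. x \<bullet> (A *v x) \<ge> 0)"

definition mat_sqrt :: "real^'n^'n \<Rightarrow> real^'n^'n" where
  "mat_sqrt A = (THE M. pos_semidef M \<and> M ** M = A)"

definition inv_sqrt :: "real^'n^'n \<Rightarrow> real^'n^'n" where
  "inv_sqrt A = matrix_inv (mat_sqrt A)"

definition spec_norm :: "real^'n^'m \<Rightarrow> real" where
  "spec_norm A = onorm (\<lambda>x. A *v x)"

text \<open>Training squared residual of kernel ridge regression with kernel KS, ridge sigma.\<close>
definition residual :: "real^'n^'n \<Rightarrow> real \<Rightarrow> real^'n \<Rightarrow> real" where
  "residual KS \<sigma> Y = (norm (Y - (KS ** matrix_inv (KS + \<sigma> *\<^sub>R mat 1)) *v Y))\<^sup>2"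

end

theory Submission
  imports Defs
begin


lemma transpose_add': "transpose (A + B) = transpose A + transpose (B::real^'n^'m)"
  by (simp add: transpose_def vec_eq_iff)

lemma sym_inner:
  fixes A :: "real^'n^'n"
  assumes "transpose A = A"
  shows "x \<bullet> (A *v y) = (A *v x) \<bullet> y"
proof -
  have "x \<bullet> (A *v y) = (x v* A) \<bullet> y" by (simp add: dot_lmul_matrix)
  also have "x v* A = transpose A *v x" by simp
  finally show ?thesis using assms by simp
qed

lemma sym_from_inner:
  fixes M :: "real^'n^'n"
  assumes "\<And>x y. x \<bullet> (M *v y) = (M *v x) \<bullet> y"
  shows "transpose M = M"
proof -
  have "transpose M *v x = M *v x" for x
  proof -
    have "\<And>y. (transpose M *v x - M *v x) \<bullet> y = 0"
      using assms by (simp add: inner_diff_left dot_lmul_matrix)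
    then show ?thesis by (metis eq_iff_diff_eq_0 inner_eq_zero_iff)
  qed
  then show ?thesis by (simp add: matrix_eq)
qed

lemma quad_zero:
  fixes a b :: real
  assumes "\<And>t. 2*t*a + t^2*b \<le> 0"
  shows "a = 0"
proof (rule ccontr)
  assume "a \<noteq> 0"
  define s where "s = \<bar>b\<bar> + 1"
  have s: "s > 0" "b \<ge> - s" unfolding s_def by auto
  define t where "t = a / s"
  have "t^2 * b \<ge> - (t^2 * s)" using mult_left_mono[OF s(2), of "t^2"] by simp
  moreover have "2*t*a = 2 * (a^2/s)" unfolding t_def by (simp add: power2_eq_square)
  moreover have "t^2 * s = a^2/s" unfolding t_def using s by (simp add: power2_eq_square)
  moreover have "a^2/s > 0" using \<open>a \<noteq> 0\<close> s by simp
  ultimately have "2*t*a + t^2*b > 0" by linarith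
  with assms show False by (meson not_le)
qed

lemma ev_exists:
  fixes A :: "real^'n^'n" and W :: "(real^'n) set"
  assumes sym: "transpose A = A" and W: "subspace W" and x0: "x0 \<in> W" "x0 \<noteq> 0"
    and inv: "\<And>x. x \<in> W \<Longrightarrow> A *v x \<in> W"
  shows "\<exists>v\<in>W. norm v = 1 \<and> A *v v = (v \<bullet> (A *v v)) *\<^sub>R v"
proof -
  define S where "S = W \<inter> sphere 0 1"
  have cS: "compact S" unfolding S_def
    by (metis Int_commute compact_Int_closed compact_sphere closed_subspace W)
  have "x0 /\<^sub>R norm x0 \<in> S" unfolding S_def using x0 W
    by (simp add: subspace_scale)
  then have ne: "S \<noteq> {}" by auto
  have ct: "continuous_on S (\<lambda>v. v \<bullet> (A *v v))"
    by (intro continuous_intros continuous_on_id linear_continuous_on matrix_vector_mul_bounded_linear)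
  obtain v where v: "v \<in> S" and vmax: "\<And>u. u \<in> S \<Longrightarrow> u \<bullet> (A *v u) \<le> v \<bullet> (A *v v)"
    using continuous_attains_sup[OF cS ne ct] by blast
  define l where "l = v \<bullet> (A *v v)"
  have vW: "v \<in> W" and nv: "norm v = 1" using v unfolding S_def by auto
  have vv: "v \<bullet> v = 1" using nv by (simp add: dot_square_norm)
  have bound: "u \<bullet> (A *v u) \<le> l * (u \<bullet> u)" if "u \<in> W" for u
  proof (cases "u = 0")
    case True then show ?thesis by simp
  next
    case False
    then have "u /\<^sub>R norm u \<in> S" unfolding S_def using that W by (simp add: subspace_scale)
    then have "(u /\<^sub>R norm u) \<bullet> (A *v (u /\<^sub>R norm u)) \<le> l" using vmax l_def by blast
    then have "(u \<bullet> (A *v u)) / (norm u)^2 \<le> l"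
      by (simp add: matrix_vector_mult_scaleR power2_eq_square divide_inverse mult_ac)
    then show ?thesis using False by (simp add: pos_divide_le_eq dot_square_norm)
  qed
  define y where "y = A *v v - l *\<^sub>R v"
  have yW: "y \<in> W" unfolding y_def using W inv vW by (simp add: subspace_diff subspace_scale)
  have vy: "v \<bullet> y = 0" unfolding y_def l_def by (simp add: inner_diff_right vv)
  have sy: "v \<bullet> (A *v y) = y \<bullet> (A *v v)" using sym_inner[OF sym, of v y] by (simp add: inner_commute)
  have "2*t*(y \<bullet> (A *v v)) + t^2 * (y \<bullet> (A *v y) - l * (y \<bullet> y)) \<le> 0" for t
  proof -
    have h1: "(v + t *\<^sub>R y) \<bullet> (A *v (v + t *\<^sub>R y)) \<le> l * ((v + t *\<^sub>R y) \<bullet> (v + t *\<^sub>R y))"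
      using bound W vW yW by (simp add: subspace_add subspace_scale)
    have h2: "(v + t *\<^sub>R y) \<bullet> (A *v (v + t *\<^sub>R y)) = l + 2*t*(y \<bullet> (A *v v)) + t^2 * (y \<bullet> (A *v y))"
      using sy unfolding l_def
      by (simp add: matrix_vector_right_distrib matrix_vector_mult_scaleR inner_add_left inner_add_right power2_eq_square algebra_simps)
    have h3: "(v + t *\<^sub>R y) \<bullet> (v + t *\<^sub>R y) = 1 + t^2 * (y \<bullet> y)"
      using vy vv by (simp add: inner_add_left inner_add_right power2_eq_square inner_commute)
    have "l + 2*t*(y \<bullet> (A *v v)) + t^2 * (y \<bullet> (A *v y)) \<le> l * (1 + t^2 * (y \<bullet> y))"
      using h1 unfolding h2 h3 .
    moreover have "l * (1 + t^2 * (y \<bullet> y)) = l + t^2 * (l * (y \<bullet> y))" by (simp add: algebra_simps)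
    moreover have "t^2 * (y \<bullet> (A *v y) - l * (y \<bullet> y)) = t^2 * (y \<bullet> (A *v y)) - t^2 * (l * (y \<bullet> y))"
      by (simp add: algebra_simps)
    ultimately show ?thesis by linarith
  qed
  then have "y \<bullet> (A *v v) = 0" by (rule quad_zero)
  moreover have "y \<bullet> (A *v v) = y \<bullet> y"
  proof -
    have "A *v v = y + l *\<^sub>R v" unfolding y_def by simp
    then show ?thesis using vy by (simp add: inner_add_right inner_commute)
  qed
  ultimately have "y = 0" by simp
  then show ?thesis using vW nv unfolding y_def l_def by auto
qed




lemma spectral_sub:
  fixes A :: "real^'n^'n"
  assumes sym: "transpose A = A"
  shows "subspace W \<Longrightarrow> (\<And>x. x \<in> W \<Longrightarrow> A *v x \<in> W) \<Longrightarrow>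
    \<exists>B. B \<subseteq> W \<and> pairwise orthogonal B \<and> (\<forall>v\<in>B. norm v = 1 \<and> A *v v = (v \<bullet> (A *v v)) *\<^sub>R v) \<and> W \<subseteq> span B"
proof (induction "dim W" arbitrary: W rule: less_induct)
  case less
  show ?case
  proof (cases "\<exists>x\<in>W. x \<noteq> 0")
    case False
    then have "W \<subseteq> span {}" by auto
    then show ?thesis by (intro exI[of _ "{}"]) auto
  next
    case True
    then obtain x0 where x0: "x0 \<in> W" "x0 \<noteq> 0" by blast
    obtain v where vW: "v \<in> W" and nv: "norm v = 1" and ev: "A *v v = (v \<bullet> (A *v v)) *\<^sub>R v"
      using ev_exists[OF sym less.prems(1) x0 less.prems(2)] by blast
    define l where "l = v \<bullet> (A *v v)"
    have vv: "v \<bullet> v = 1" using nv by (simp add: dot_square_norm)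
    define W' where "W' = W \<inter> {x. v \<bullet> x = 0}"
    have sW': "subspace W'" unfolding W'_def
      using less.prems(1) subspace_orthogonal_to_vector[of v]
      by (intro subspace_inter) (simp_all add: orthogonal_def)
    have invW': "A *v x \<in> W'" if "x \<in> W'" for x
    proof -
      have "v \<bullet> (A *v x) = (A *v v) \<bullet> x" by (rule sym_inner[OF sym])
      also have "\<dots> = 0" using that unfolding W'_def by (simp add: ev[folded l_def])
      finally show ?thesis using that less.prems(2) unfolding W'_def by auto
    qed
    have "v \<notin> W'" unfolding W'_def using vv by simp
    moreover have "W' \<subseteq> W" unfolding W'_def by blast
    ultimately have "W' \<subset> W" using vW by blast
    then have "dim W' < dim W"
    proof -
      have e1: "span W' = W'" using sW' by (rule span_eq_iff[THEN iffD2])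
      have e2: "span W = W" using less.prems(1) by (rule span_eq_iff[THEN iffD2])
      show ?thesis using dim_psubset[of W' W] \<open>W' \<subset> W\<close> unfolding e1 e2 by blast
    qed
    then obtain B' where B': "B' \<subseteq> W'" "pairwise orthogonal B'"
        "\<forall>v\<in>B'. norm v = 1 \<and> A *v v = (v \<bullet> (A *v v)) *\<^sub>R v" "W' \<subseteq> span B'"
      using less.hyps[OF _ sW' invW'] by blast
    have "insert v B' \<subseteq> W" using B'(1) vW unfolding W'_def by auto
    moreover have "pairwise orthogonal (insert v B')"
      using B'(1,2) unfolding W'_def
      by (auto simp: pairwise_insert orthogonal_def inner_commute)
    moreover have "W \<subseteq> span (insert v B')"
    proof
      fix x assume x: "x \<in> W"
      have "x - (v \<bullet> x) *\<^sub>R v \<in> W'" unfolding W'_def using x vW vv less.prems(1)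
        by (simp add: subspace_diff subspace_scale inner_diff_right)
      then have "x - (v \<bullet> x) *\<^sub>R v \<in> span (insert v B')"
        using B'(4) span_mono[of B' "insert v B'"] by blast
      moreover have "(v \<bullet> x) *\<^sub>R v \<in> span (insert v B')"
        by (simp add: span_base span_scale)
      ultimately have "x - (v \<bullet> x) *\<^sub>R v + (v \<bullet> x) *\<^sub>R v \<in> span (insert v B')"
        by (rule span_add)
      then show "x \<in> span (insert v B')" by simp
    qed
    moreover have "\<forall>u\<in>insert v B'. norm u = 1 \<and> A *v u = (u \<bullet> (A *v u)) *\<^sub>R u"
      using B'(3) nv ev by blast
    ultimately show ?thesis by blast
  qed
qed



lemma onb_coeff:
  fixes B :: "(real^'n) set"
  assumes "finite B" "pairwise orthogonal B" "\<forall>v\<in>B. norm v = 1" "w \<in> B"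
  shows "w \<bullet> (\<Sum>v\<in>B. f v *\<^sub>R v) = f w"
proof -
  have "w \<bullet> (\<Sum>v\<in>B. f v *\<^sub>R v) = (\<Sum>v\<in>B. f v * (w \<bullet> v))"
    by (simp add: inner_sum_right)
  also have "\<dots> = (\<Sum>v\<in>B. if v = w then f v else 0)"
  proof (rule sum.cong)
    fix v assume v: "v \<in> B"
    show "f v * (w \<bullet> v) = (if v = w then f v else 0)"
    proof (cases "v = w")
      case True
      then have "w \<bullet> v = 1" using assms(3) v by (simp add: dot_square_norm)
      then show ?thesis using True by simp
    next
      case False
      then have "w \<bullet> v = 0" using assms(2,4) v unfolding pairwise_def orthogonal_def by auto
      then show ?thesis using False by simp
    qed
  qed simp
  also have "\<dots> = f w" using assms(1,4) by (simp add: sum.delta')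
  finally show ?thesis .
qed

lemma onb_expand:
  fixes B :: "(real^'n) set"
  assumes "finite B" "pairwise orthogonal B" "\<forall>v\<in>B. norm v = 1" "x \<in> span B"
  shows "x = (\<Sum>v\<in>B. (v \<bullet> x) *\<^sub>R v)"
proof -
  define y where "y = x - (\<Sum>v\<in>B. (v \<bullet> x) *\<^sub>R v)"
  have "y \<in> span B"
  proof -
    have "(\<Sum>v\<in>B. (v \<bullet> x) *\<^sub>R v) \<in> span B"
      by (rule span_sum) (simp add: span_base span_scale)
    then show ?thesis unfolding y_def by (rule span_diff[OF assms(4)])
  qed
  moreover have "orthogonal y w" if "w \<in> B" for w
  proof -
    have "w \<bullet> y = 0"
      unfolding y_def using onb_coeff[OF assms(1-3) that, of "\<lambda>v. v \<bullet> x"]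
      by (simp add: inner_diff_right)
    then show ?thesis by (simp add: orthogonal_def inner_commute)
  qed
  ultimately have "orthogonal y y" using orthogonal_to_span[of y B y] by blast
  then have "y = 0" by (simp add: orthogonal_def)
  then show ?thesis unfolding y_def by simp
qed

definition onb_eig :: "real^'n^'n \<Rightarrow> (real^'n) set \<Rightarrow> bool" where
  "onb_eig A B \<longleftrightarrow> finite B \<and> B \<noteq> {} \<and> pairwise orthogonal B \<and> (\<forall>v\<in>B. norm v = 1 \<and> A *v v = (v \<bullet> (A *v v)) *\<^sub>R v)
     \<and> (\<forall>x. x = (\<Sum>v\<in>B. (v \<bullet> x) *\<^sub>R v))"

lemma spectral:
  fixes A :: "real^'n^'n"
  assumes sym: "transpose A = A"
  shows "\<exists>B. onb_eig A B"
proof -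
  obtain B where B: "pairwise orthogonal B" "\<forall>v\<in>B. norm v = 1 \<and> A *v v = (v \<bullet> (A *v v)) *\<^sub>R v"
     "UNIV \<subseteq> span B"
    using spectral_sub[OF sym, of UNIV] by auto
  have fin: "finite B" using B(1) by (rule pairwise_orthogonal_imp_finite)
  have "B \<noteq> {}"
  proof
    assume "B = {}"
    then have "(axis undefined 1 :: real^'n) \<in> span {}" using B(3) by blast
    then have "(axis undefined 1 :: real^'n) = 0" by simp
    then show False by (simp add: axis_eq_0_iff)
  qed
  moreover have "\<forall>x. x = (\<Sum>v\<in>B. (v \<bullet> x) *\<^sub>R v)"
  proof
    fix x :: "real^'n"
    have "x \<in> span B" using B(3) by blast
    then show "x = (\<Sum>v\<in>B. (v \<bullet> x) *\<^sub>R v)"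
      using onb_expand[OF fin B(1)] B(2) by blast
  qed
  ultimately show ?thesis unfolding onb_eig_def using fin B(1,2) by blast
qed




lemma mv_sum: "(A::real^'n^'m) *v (\<Sum>v\<in>B. f v) = (\<Sum>v\<in>B. A *v f v)"
  using linear_sum[OF matrix_vector_mul_linear[of A]] by (simp add: o_def)

context
  fixes A :: "real^'n^'n" and B and lam
  assumes onb: "onb_eig A B" and lam_def: "lam = (\<lambda>v. v \<bullet> (A *v v))"
begin

lemma onbF: "finite B" "B \<noteq> {}" "pairwise orthogonal B" "\<And>v. v \<in> B \<Longrightarrow> norm v = 1"
   "\<And>x. x = (\<Sum>v\<in>B. (v \<bullet> x) *\<^sub>R v)"
  using onb unfolding onb_eig_def by auto

lemma eig: "v \<in> B \<Longrightarrow> A *v v = lam v *\<^sub>R v"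
  using onb unfolding onb_eig_def lam_def by blast

lemma coeff: "w \<in> B \<Longrightarrow> w \<bullet> (\<Sum>v\<in>B. f v *\<^sub>R v) = f w"
  using onb_coeff[OF onbF(1,3)] onbF(4) by blast

lemma apply_eq: "A *v x = (\<Sum>v\<in>B. (lam v * (v \<bullet> x)) *\<^sub>R v)"
proof -
  have "A *v x = A *v (\<Sum>v\<in>B. (v \<bullet> x) *\<^sub>R v)" using onbF(5)[of x] by simp
  also have "\<dots> = (\<Sum>v\<in>B. (v \<bullet> x) *\<^sub>R (A *v v))" by (simp add: mv_sum matrix_vector_mult_scaleR)
  also have "\<dots> = (\<Sum>v\<in>B. (lam v * (v \<bullet> x)) *\<^sub>R v)"
    by (rule sum.cong) (simp_all add: eig)
  finally show ?thesis .
qed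

lemma coord_apply: "w \<in> B \<Longrightarrow> w \<bullet> (A *v x) = lam w * (w \<bullet> x)"
  unfolding apply_eq by (rule coeff)

lemma inner_expand: "x \<bullet> y = (\<Sum>v\<in>B. (v \<bullet> x) * (v \<bullet> y))"
proof -
  have "x \<bullet> y = (\<Sum>v\<in>B. (v \<bullet> x) *\<^sub>R v) \<bullet> y" using onbF(5)[of x] by simp
  also have "\<dots> = (\<Sum>v\<in>B. (v \<bullet> x) * (v \<bullet> y))" by (simp add: inner_sum_left)
  finally show ?thesis .
qed

lemma quad_eq: "x \<bullet> (A *v x) = (\<Sum>v\<in>B. lam v * (v \<bullet> x)^2)"
  unfolding inner_expand[of x "A *v x"]
  by (rule sum.cong) (simp_all add: coord_apply power2_eq_square)

lemma norm2_eq: "x \<bullet> x = (\<Sum>v\<in>B. (v \<bullet> x)^2)"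
  unfolding inner_expand[of x x] by (simp add: power2_eq_square)

lemma anorm2_eq: "(A *v x) \<bullet> (A *v x) = (\<Sum>v\<in>B. (lam v)^2 * (v \<bullet> x)^2)"
  unfolding inner_expand[of "A *v x" "A *v x"]
  by (rule sum.cong) (simp_all add: coord_apply power2_eq_square)

lemma eigenvalues_eq: "eigenvalues A = lam ` B"
proof
  show "lam ` B \<subseteq> eigenvalues A"
  proof
    fix e assume "e \<in> lam ` B"
    then obtain v where v: "v \<in> B" "e = lam v" by blast
    then have "v \<noteq> 0" using onbF(4)[of v] by auto
    then show "e \<in> eigenvalues A" unfolding eigenvalues_def using v eig by blast
  qed
next
  show "eigenvalues A \<subseteq> lam ` B"
  proof
    fix e assume "e \<in> eigenvalues A"
    then obtain u where u: "u \<noteq> 0" "A *v u = e *\<^sub>R u" unfolding eigenvalues_def by blast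
    have "\<exists>v\<in>B. v \<bullet> u \<noteq> 0"
    proof (rule ccontr)
      assume "\<not> ?thesis"
      then have "u = 0" using onbF(5)[of u] by simp
      with u show False by simp
    qed
    then obtain v where v: "v \<in> B" "v \<bullet> u \<noteq> 0" by blast
    have "e = lam v" using v(2) coord_apply[OF v(1), of u] u(2) by auto
    then show "e \<in> lam ` B" using v(1) by blast
  qed
qed

lemma lmax_eq: "lambda_max A = Max (lam ` B)"
  unfolding lambda_max_def eigenvalues_eq ..
lemma lmin_eq: "lambda_min A = Min (lam ` B)"
  unfolding lambda_min_def eigenvalues_eq ..

lemma lam_le_max: "v \<in> B \<Longrightarrow> lam v \<le> lambda_max A"
  unfolding lmax_eq using onbF(1) by (simp add: Max_ge)
lemma lam_ge_min: "v \<in> B \<Longrightarrow> lambda_min A \<le> lam v"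
  unfolding lmin_eq using onbF(1) by (simp add: Min_le)

lemma ray_max: "x \<bullet> (A *v x) \<le> lambda_max A * (x \<bullet> x)"
  unfolding quad_eq norm2_eq sum_distrib_left
  by (rule sum_mono) (simp add: lam_le_max mult_right_mono)

lemma ray_min: "lambda_min A * (x \<bullet> x) \<le> x \<bullet> (A *v x)"
  unfolding quad_eq norm2_eq sum_distrib_left
  by (rule sum_mono) (simp add: lam_ge_min mult_right_mono)

lemma max_attained: "\<exists>v. norm v = 1 \<and> lambda_max A = v \<bullet> (A *v v)"
proof -
  have "Max (lam ` B) \<in> lam ` B" using onbF(1,2) by simp
  then obtain v where "v \<in> B" "lambda_max A = lam v" unfolding lmax_eq by blast
  then show ?thesis using onbF(4) lam_def by blast
qed

lemma min_attained: "\<exists>v. norm v = 1 \<and> lambda_min A = v \<bullet> (A *v v)"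
proof -
  have "Min (lam ` B) \<in> lam ` B" using onbF(1,2) by simp
  then obtain v where "v \<in> B" "lambda_min A = lam v" unfolding lmin_eq by blast
  then show ?thesis using onbF(4) lam_def by blast
qed

lemma min_le_max: "lambda_min A \<le> lambda_max A"
proof -
  obtain v where "v \<in> B" using onbF(2) by blast
  then show ?thesis using lam_le_max lam_ge_min by (meson order_trans)
qed

lemma pd_bounds:
  assumes pd: "pos_def A"
  shows "lambda_min A > 0" "norm (A *v x) \<le> lambda_max A * norm x"
    "lambda_min A * norm x \<le> norm (A *v x)"
proof -
  have lpos: "lam v > 0" if "v \<in> B" for v
  proof -
    have "v \<noteq> 0" using onbF(4)[OF that] by auto
    then show ?thesis using pd unfolding pos_def_def lam_def by blast
  qed
  have "Min (lam ` B) \<in> lam ` B" using onbF(1,2) by simp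
  then show mp: "lambda_min A > 0" unfolding lmin_eq using lpos by (metis imageE)
  have "(A *v x) \<bullet> (A *v x) \<le> (lambda_max A)^2 * (x \<bullet> x)"
    unfolding anorm2_eq[of x] norm2_eq[of x] sum_distrib_left
  proof (rule sum_mono)
    fix v assume v: "v \<in> B"

    have "(lam v)^2 \<le> (lambda_max A)^2"
      using lpos[OF v] lam_le_max[OF v] by (simp add: power_mono)
    then show "(lam v)^2 * (v \<bullet> x)^2 \<le> (lambda_max A)^2 * (v \<bullet> x)^2"
      by (simp add: mult_right_mono)
  qed
  then have "(norm (A *v x))^2 \<le> (lambda_max A * norm x)^2"
    by (simp add: dot_square_norm power_mult_distrib)
  moreover have "lambda_max A \<ge> 0"
    using mp min_le_max by linarith
  then have "0 \<le> lambda_max A * norm x" by simp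
  ultimately show "norm (A *v x) \<le> lambda_max A * norm x"
    by (rule power2_le_imp_le)
  have "(lambda_min A)^2 * (x \<bullet> x) \<le> (A *v x) \<bullet> (A *v x)"
    unfolding anorm2_eq[of x] norm2_eq[of x] sum_distrib_left
  proof (rule sum_mono)
    fix v assume v: "v \<in> B"
    have "(lambda_min A)^2 \<le> (lam v)^2"
      using mp lam_ge_min[OF v] by (simp add: power_mono)
    then show "(lambda_min A)^2 * (v \<bullet> x)^2 \<le> (lam v)^2 * (v \<bullet> x)^2"
      by (simp add: mult_right_mono)
  qed
  then have "(lambda_min A * norm x)^2 \<le> (norm (A *v x))^2"
    by (simp add: dot_square_norm power_mult_distrib)
  then show "lambda_min A * norm x \<le> norm (A *v x)"
    by (rule power2_le_imp_le) simp
qed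


end




lemma scaleR_mv: "((c::real) *\<^sub>R (A::real^'n^'m)) *v x = c *\<^sub>R (A *v x)"
  by (simp add: vec_eq_iff matrix_vector_mult_def sum_distrib_left mult_ac)

lemma sqrt_exists:
  fixes K :: "real^'n^'n"
  assumes pd: "pos_def K"
  shows "\<exists>M. pos_semidef M \<and> M ** M = K"
proof -
  have sym: "transpose K = K" using pd unfolding pos_def_def by simp
  obtain B where onb: "onb_eig K B" using spectral[OF sym] by blast
  define lam where "lam = (\<lambda>v. v \<bullet> (K *v v))"
  note F = onbF[OF onb lam_def]
  have lpos: "lam v \<ge> 0" if "v \<in> B" for v
  proof -
    have "v \<noteq> 0" using F(4)[OF that] by auto
    then show ?thesis using pd unfolding pos_def_def lam_def by (simp add: less_imp_le)
  qed
  define f where "f = (\<lambda>x. \<Sum>v\<in>B. (sqrt (lam v) * (v \<bullet> x)) *\<^sub>R v)"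
  have lin: "linear f" unfolding f_def
    by (rule linearI) (simp_all add: inner_add_right scaleR_add_left sum.distrib scaleR_sum_right algebra_simps)
  define M where "M = matrix f"
  have Mf: "M *v x = f x" for x
    unfolding M_def by (rule matrix_works[OF linear_matrix_vector_mul_eq[THEN iffD2, OF lin]])
  have symf: "x \<bullet> f y = f x \<bullet> y" for x y
    unfolding f_def inner_sum_right inner_sum_left
    by (rule sum.cong) (simp_all add: inner_commute mult_ac)
  have "transpose M = M" by (rule sym_from_inner) (simp add: Mf symf)
  moreover have "x \<bullet> (M *v x) \<ge> 0" for x
    unfolding Mf f_def inner_sum_right
    by (rule sum_nonneg) (simp add: lpos inner_commute mult.assoc)
  moreover have "M ** M = K"
  proof -
    have "(M ** M) *v x = K *v x" for x
    proof -
      have "(M ** M) *v x = f (f x)" by (simp add: Mf flip: matrix_vector_mul_assoc)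
      also have "\<dots> = (\<Sum>v\<in>B. (sqrt (lam v) * (v \<bullet> f x)) *\<^sub>R v)" unfolding f_def ..
      also have "\<dots> = (\<Sum>v\<in>B. (lam v * (v \<bullet> x)) *\<^sub>R v)"
      proof (rule sum.cong)
        fix v assume v: "v \<in> B"
        have "v \<bullet> f x = sqrt (lam v) * (v \<bullet> x)" unfolding f_def by (rule coeff[OF onb lam_def v])
        then show "(sqrt (lam v) * (v \<bullet> f x)) *\<^sub>R v = (lam v * (v \<bullet> x)) *\<^sub>R v"
          using lpos[OF v] by (simp add: mult.assoc[symmetric] real_sqrt_mult_self)
      qed simp
      also have "\<dots> = K *v x" by (rule apply_eq[OF onb lam_def, symmetric])
      finally show ?thesis .
    qed
    then show ?thesis by (simp add: matrix_eq)
  qed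
  ultimately show ?thesis unfolding pos_semidef_def by blast
qed

lemma alg_d0:
  fixes d p :: real
  assumes "d*d + 2*d*p = 0" "p \<ge> 0" "p + d \<ge> 0"
  shows "d = 0"
proof (rule ccontr)
  assume "d \<noteq> 0"
  have "d * (d + 2*p) = 0" using assms(1) by (simp add: algebra_simps)
  then have "d + 2*p = 0" using \<open>d \<noteq> 0\<close> by simp
  then show False using assms(2,3) \<open>d \<noteq> 0\<close> by linarith
qed

lemma sqrt_unique:
  fixes M N :: "real^'n^'n"
  assumes M: "pos_semidef M" and N: "pos_semidef N" and eq: "M ** M = N ** N"
  shows "M = N"
proof -
  have sM: "transpose M = M" and sN: "transpose N = N"
    using M N unfolding pos_semidef_def by auto
  define D where "D = M - N"
  have sD: "transpose D = D" unfolding D_def using sM sN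
    by (simp add: transpose_def vec_eq_iff)
  obtain B where onb: "onb_eig D B" using spectral[OF sD] by blast
  define lam where "lam = (\<lambda>v. v \<bullet> (D *v v))"
  have l0: "lam v = 0" if v: "v \<in> B" for v
  proof -
    define d where "d = lam v"
    have vv: "v \<bullet> v = 1" using onbF(4)[OF onb lam_def v] by (simp add: dot_square_norm)
    have Dv: "D *v v = d *\<^sub>R v" unfolding d_def by (rule eig[OF onb lam_def v])
    define a where "a = M *v v"
    define b where "b = N *v v"
    have ab: "a = b + d *\<^sub>R v" using Dv unfolding a_def b_def D_def
      by (simp add: matrix_vector_mult_diff_rdistrib algebra_simps)
    have "a \<bullet> a = v \<bullet> (M *v (M *v v))" unfolding a_def using sym_inner[OF sM, of v "M *v v"] by simp
    also have "\<dots> = v \<bullet> (N *v (N *v v))" using eq by (simp add: matrix_vector_mul_assoc)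
    also have "\<dots> = b \<bullet> b" unfolding b_def using sym_inner[OF sN, of v "N *v v"] by simp
    finally have "a \<bullet> a = b \<bullet> b" .
    then have "d*d + 2*d*(v \<bullet> b) = 0" unfolding ab using vv
      by (simp add: inner_add_left inner_add_right inner_commute algebra_simps)
    moreover have "v \<bullet> b \<ge> 0" using N unfolding b_def pos_semidef_def by blast
    moreover have "v \<bullet> b + d \<ge> 0"
    proof -
      have "v \<bullet> a \<ge> 0" using M unfolding a_def pos_semidef_def by blast
      then show ?thesis unfolding ab using vv by (simp add: inner_add_right)
    qed
    ultimately have "d = 0" by (rule alg_d0)
    then show ?thesis unfolding d_def .
  qed
  have "D *v x = 0" for x
    unfolding apply_eq[OF onb lam_def] by (simp add: l0)
  then have "M *v x = N *v x" for x unfolding D_def by (simp add: matrix_vector_mult_diff_rdistrib)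
  then show ?thesis by (simp add: matrix_eq)
qed

lemma mat_sqrt_props:
  fixes K :: "real^'n^'n"
  assumes pd: "pos_def K"
  shows "pos_semidef (mat_sqrt K) \<and> mat_sqrt K ** mat_sqrt K = K"
proof -
  have "\<exists>!M. pos_semidef M \<and> M ** M = K"
    using sqrt_exists[OF pd] sqrt_unique by blast
  then show ?thesis unfolding mat_sqrt_def by (rule theI')
qed

lemma pd_invertible:
  fixes A :: "real^'n^'n"
  assumes pd: "pos_def A"
  shows "invertible A"
proof -
  have "\<forall>x. A *v x = 0 \<longrightarrow> x = 0"
  proof (intro allI impI)
    fix x assume "A *v x = 0"
    then have "x \<bullet> (A *v x) = 0" by simp
    then show "x = 0" using pd unfolding pos_def_def by (metis less_irrefl)
  qed
  then show ?thesis using matrix_left_invertible_ker invertible_left_inverse by blast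
qed

lemma matrix_inv_props:
  fixes A :: "real^'n^'n"
  assumes "invertible A"
  shows "A ** matrix_inv A = mat 1" "matrix_inv A ** A = mat 1"
proof -
  have "\<exists>A'. A ** A' = mat 1 \<and> A' ** A = mat 1" using assms unfolding invertible_def by blast
  then have "A ** matrix_inv A = mat 1 \<and> matrix_inv A ** A = mat 1"
    unfolding matrix_inv_def by (rule someI_ex)
  then show "A ** matrix_inv A = mat 1" "matrix_inv A ** A = mat 1" by auto
qed

lemma eta_bound:
  fixes K S :: "real^'n^'n"
  assumes pd: "pos_def K"
  shows "x \<bullet> (S *v x) \<le> spec_norm (inv_sqrt K ** S ** inv_sqrt K) * (x \<bullet> (K *v x))"
proof -
  define M where "M = mat_sqrt K"
  define Mi where "Mi = inv_sqrt K"
  have Mi_def': "Mi = matrix_inv M" unfolding Mi_def M_def inv_sqrt_def ..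
  have MP: "pos_semidef M" "M ** M = K" using mat_sqrt_props[OF pd] unfolding M_def by auto
  have sM: "transpose M = M" using MP(1) unfolding pos_semidef_def by simp
  have invK: "invertible K" by (rule pd_invertible[OF pd])
  have "M ** (M ** matrix_inv K) = mat 1"
    using matrix_inv_props(1)[OF invK] MP(2) by (simp add: matrix_mul_assoc)
  then have invM: "invertible M" using invertible_right_inverse by blast
  have MMi: "M ** Mi = mat 1" "Mi ** M = mat 1" unfolding Mi_def' using matrix_inv_props[OF invM] by auto
  have "transpose Mi ** M = mat 1"
    using arg_cong[OF MMi(1), of transpose] sM by (simp add: matrix_transpose_mul)
  then have sMi: "transpose Mi = Mi"
    by (metis MMi(1) matrix_mul_assoc matrix_mul_lid matrix_mul_rid)
  define P where "P = Mi ** S ** Mi"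
  define \<eta> where "\<eta> = spec_norm P"
  define y where "y = M *v x"
  have xy: "x = Mi *v y" unfolding y_def using MMi(2) by (simp add: matrix_vector_mul_assoc)
  have "x \<bullet> (S *v x) = y \<bullet> (P *v y)"
  proof -
    have "x \<bullet> (S *v x) = (Mi *v y) \<bullet> (S *v (Mi *v y))" using xy by simp
    also have "\<dots> = y \<bullet> (Mi *v (S *v (Mi *v y)))" using sym_inner[OF sMi, of y "S *v (Mi *v y)"] by simp
    also have "\<dots> = y \<bullet> (P *v y)" unfolding P_def by (simp add: matrix_vector_mul_assoc matrix_mul_assoc)
    finally show ?thesis .
  qed
  also have "\<dots> \<le> norm y * norm (P *v y)" by (rule norm_cauchy_schwarz)
  also have "\<dots> \<le> norm y * (\<eta> * norm y)"
    unfolding \<eta>_def spec_norm_def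
    by (rule mult_left_mono[OF onorm[OF matrix_vector_mul_bounded_linear]]) simp
  also have "\<dots> = \<eta> * (y \<bullet> y)" by (simp add: dot_square_norm power2_eq_square)
  also have "y \<bullet> y = x \<bullet> (K *v x)"
    unfolding y_def using sym_inner[OF sM, of x "M *v x"] MP(2) by (simp add: matrix_vector_mul_assoc)
  finally show ?thesis unfolding \<eta>_def P_def Mi_def .
qed

lemma residual_eq:
  fixes KS :: "real^'n^'n"
  assumes inv: "invertible (KS + \<sigma> *\<^sub>R mat 1)"
  shows "residual KS \<sigma> Y = \<sigma>^2 * (norm (matrix_inv (KS + \<sigma> *\<^sub>R mat 1) *v Y))^2"
    "(KS + \<sigma> *\<^sub>R mat 1) *v (matrix_inv (KS + \<sigma> *\<^sub>R mat 1) *v Y) = Y"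
proof -
  define A where "A = KS + \<sigma> *\<^sub>R mat 1"
  define u where "u = matrix_inv A *v Y"
  show AU: "(KS + \<sigma> *\<^sub>R mat 1) *v (matrix_inv (KS + \<sigma> *\<^sub>R mat 1) *v Y) = Y"
    using matrix_inv_props(1)[OF inv] by (simp add: matrix_vector_mul_assoc)
  have "A *v u = KS *v u + \<sigma> *\<^sub>R u" unfolding A_def by (simp add: matrix_vector_mult_add_rdistrib scaleR_mv)
  then have "Y - KS *v u = \<sigma> *\<^sub>R u" using AU unfolding A_def u_def by (simp add: algebra_simps)
  moreover have "(KS ** matrix_inv A) *v Y = KS *v u" unfolding u_def by (simp add: matrix_vector_mul_assoc)
  ultimately have "residual KS \<sigma> Y = (norm (\<sigma> *\<^sub>R u))^2" unfolding residual_def A_def by simp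
  then show "residual KS \<sigma> Y = \<sigma>^2 * (norm (matrix_inv (KS + \<sigma> *\<^sub>R mat 1) *v Y))^2"
    unfolding u_def A_def by (simp add: power_mult_distrib)
qed




lemma gram_psd:
  fixes J :: "real^'p^'n"
  shows "transpose (J ** transpose J) = J ** transpose J" "x \<bullet> ((J ** transpose J) *v x) \<ge> 0"
proof -
  show "transpose (J ** transpose J) = J ** transpose J" by (simp add: matrix_transpose_mul)
  have "x \<bullet> ((J ** transpose J) *v x) = x \<bullet> (J *v (transpose J *v x))"
    by (metis matrix_vector_mul_assoc)
  also have "\<dots> = (transpose J *v x) \<bullet> (transpose J *v x)"
    by (metis dot_lmul_matrix transpose_matrix_vector)
  finally show "x \<bullet> ((J ** transpose J) *v x) \<ge> 0" by simp
qed

lemma key_ineq: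
  fixes e1 e2 mu m1 L1 L2 Lam c :: real
  assumes "0 \<le> e1" "e1 < 1" "0 \<le> e2" "e2 < 1" "0 < mu" "mu \<le> m1" "m1 \<le> L1"
    "0 < L2" "L2 \<le> (1 + e2) * Lam" "Lam \<le> c * mu"
  shows "L2^2 \<le> (c / (1 - e1)^2 * (c / (1 - e2)^2)) * L1 * m1"
proof -
  have "Lam > 0"
  proof (rule ccontr)
    assume "\<not> Lam > 0"
    then have "(1 + e2) * Lam \<le> 0" using assms(3) by (simp add: mult_nonneg_nonpos)
    then show False using assms(8,9) by linarith
  qed
  then have "c * mu > 0" using assms(10) by linarith
  then have c0: "c \<ge> 0" using assms(5) by (simp add: zero_less_mult_iff)
  have "L2 \<le> (1 + e2) * (c * mu)" using assms(3,9,10) by (smt (verit) mult_left_mono)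
  then have h1: "L2^2 \<le> ((1 + e2) * (c * mu))^2" using assms(8) by (simp add: power_mono)
  have q1: "(1 - e1)^2 \<le> 1" "(1 - e1)^2 > 0" using assms(1,2) by (simp_all add: power_le_one)
  have q2: "(1 + e2)^2 * (1 - e2)^2 \<le> 1"
  proof -
    have "(1 + e2)^2 * (1 - e2)^2 = (1 - e2^2)^2" by (simp add: power2_eq_square algebra_simps)
    also have "\<dots> \<le> 1" using assms(3,4) by (simp add: power_le_one abs_square_le_1)
    finally show ?thesis .
  qed
  have q3: "(1 - e2)^2 > 0" using assms(4) by simp
  have hb: "(1 + e2)^2 * c^2 \<le> c / (1 - e1)^2 * (c / (1 - e2)^2)"
  proof -
    have "(1 + e2)^2 * c^2 * ((1 - e1)^2 * (1 - e2)^2) \<le> c^2"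
    proof -
      have "(1 + e2)^2 * c^2 * ((1 - e1)^2 * (1 - e2)^2) = c^2 * ((1 - e1)^2 * ((1 + e2)^2 * (1 - e2)^2))"
        by (simp add: mult_ac)
      also have "\<dots> \<le> c^2 * (1 * 1)"
        by (intro mult_left_mono mult_mono q1 q2) simp_all
      finally show ?thesis by simp
    qed
    moreover have "c / (1 - e1)^2 * (c / (1 - e2)^2) = c^2 / ((1 - e1)^2 * (1 - e2)^2)"
      by (simp only: times_divide_times_eq power2_eq_square)
    moreover have "(1 - e1)^2 * (1 - e2)^2 > 0" using q1 q3 by simp
    ultimately show ?thesis by (simp only: pos_le_divide_eq)
  qed
  have hm: "mu^2 \<le> L1 * m1" using assms(5,6,7)
    by (simp add: power2_eq_square mult_mono)
  have "L2^2 \<le> ((1 + e2)^2 * c^2) * mu^2" using h1 by (simp add: power_mult_distrib)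
  also have "\<dots> \<le> (c / (1 - e1)^2 * (c / (1 - e2)^2)) * (L1 * m1)"
    by (rule mult_mono[OF hb hm]) (use c0 q1 q3 in simp_all)
  finally show ?thesis by (simp add: mult_ac)
qed




lemma eig_facts:
  fixes A :: "real^'n^'n"
  assumes pd: "pos_def A"
  shows "lambda_min A > 0" "\<And>x. norm (A *v x) \<le> lambda_max A * norm x"
    "\<And>x. lambda_min A * norm x \<le> norm (A *v x)"
    "\<And>x. x \<bullet> (A *v x) \<le> lambda_max A * (x \<bullet> x)"
    "\<And>x. lambda_min A * (x \<bullet> x) \<le> x \<bullet> (A *v x)"
    "\<exists>v. norm v = 1 \<and> lambda_max A = v \<bullet> (A *v v)"
    "\<exists>v. norm v = 1 \<and> lambda_min A = v \<bullet> (A *v v)"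
    "lambda_min A \<le> lambda_max A"
proof -
  have sym: "transpose A = A" using pd unfolding pos_def_def by simp
  obtain B where onb: "onb_eig A B" using spectral[OF sym] by blast
  note L = pd_bounds[OF onb refl pd] ray_max[OF onb refl] ray_min[OF onb refl]
    max_attained[OF onb refl] min_attained[OF onb refl] min_le_max[OF onb refl]
  show "lambda_min A > 0" "\<And>x. norm (A *v x) \<le> lambda_max A * norm x"
    "\<And>x. lambda_min A * norm x \<le> norm (A *v x)"
    "\<And>x. x \<bullet> (A *v x) \<le> lambda_max A * (x \<bullet> x)"
    "\<And>x. lambda_min A * (x \<bullet> x) \<le> x \<bullet> (A *v x)"
    "\<exists>v. norm v = 1 \<and> lambda_max A = v \<bullet> (A *v v)"
    "\<exists>v. norm v = 1 \<and> lambda_min A = v \<bullet> (A *v v)"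
    "lambda_min A \<le> lambda_max A" using L by auto
qed

lemma one_side:
  fixes K S1 S2 :: "real^'n^'n" and \<sigma> c :: real and Y :: "real^'n"
  assumes K_pd: "pos_def K"
    and S1: "transpose S1 = S1" "\<And>x. x \<bullet> (S1 *v x) \<ge> 0"
    and S2: "transpose S2 = S2" "\<And>x. x \<bullet> (S2 *v x) \<ge> 0"
    and sigma_pos: "\<sigma> > 0"
    and Y_nz: "Y \<noteq> 0"
    and eta1: "spec_norm (inv_sqrt K ** S1 ** inv_sqrt K) < 1"
    and eta2: "spec_norm (inv_sqrt K ** S2 ** inv_sqrt K) < 1"
    and cond: "cond_num (K + \<sigma> *\<^sub>R mat 1) \<le> c"
  shows "sqrt (residual (K + S1) \<sigma> Y / residual (K + S2) \<sigma> Y) * lambda_max (K + S2 + \<sigma> *\<^sub>R mat 1)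
     \<le> (c / (1 - spec_norm (inv_sqrt K ** S1 ** inv_sqrt K))\<^sup>2 * (c / (1 - spec_norm (inv_sqrt K ** S2 ** inv_sqrt K))\<^sup>2))
       * lambda_max (K + S1 + \<sigma> *\<^sub>R mat 1) \<and>
     sqrt (residual (K + S1) \<sigma> Y / residual (K + S2) \<sigma> Y) > 0 \<and>
     lambda_max (K + S1 + \<sigma> *\<^sub>R mat 1) > 0 \<and> lambda_max (K + S2 + \<sigma> *\<^sub>R mat 1) > 0"
proof -
  define e1 where "e1 = spec_norm (inv_sqrt K ** S1 ** inv_sqrt K)"
  define e2 where "e2 = spec_norm (inv_sqrt K ** S2 ** inv_sqrt K)"
  define Bm where "Bm = K + \<sigma> *\<^sub>R mat 1"
  define A1 where "A1 = K + S1 + \<sigma> *\<^sub>R mat 1"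
  define A2 where "A2 = K + S2 + \<sigma> *\<^sub>R mat 1"
  have e0: "e1 \<ge> 0" "e2 \<ge> 0" unfolding e1_def e2_def spec_norm_def
    by (simp_all add: onorm_pos_le[OF matrix_vector_mul_bounded_linear])
  have sK: "transpose K = K" using K_pd unfolding pos_def_def by simp
  have Bmq: "x \<bullet> (Bm *v x) = x \<bullet> (K *v x) + \<sigma> * (x \<bullet> x)" for x
    unfolding Bm_def by (simp add: matrix_vector_mult_add_rdistrib scaleR_mv inner_add_right)
  have A1q: "x \<bullet> (A1 *v x) = x \<bullet> (Bm *v x) + x \<bullet> (S1 *v x)" for x
    unfolding A1_def Bm_def by (simp add: matrix_vector_mult_add_rdistrib inner_add_right)
  have A2q: "x \<bullet> (A2 *v x) = x \<bullet> (Bm *v x) + x \<bullet> (S2 *v x)" for x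
    unfolding A2_def Bm_def by (simp add: matrix_vector_mult_add_rdistrib inner_add_right)
  have Kpos: "x \<bullet> (K *v x) \<ge> 0" for x
    using K_pd unfolding pos_def_def by (cases "x = 0") (auto simp: less_imp_le)
  have tsc: "transpose (\<sigma> *\<^sub>R mat 1 :: real^'n^'n) = \<sigma> *\<^sub>R mat 1" by (simp add: transpose_scalar)
  have Bpd: "pos_def Bm"
    unfolding pos_def_def
  proof
    show "transpose Bm = Bm" unfolding Bm_def using sK tsc by (simp add: transpose_add')
    show "\<forall>x. x \<noteq> 0 \<longrightarrow> 0 < x \<bullet> (Bm *v x)"
      using K_pd sigma_pos unfolding pos_def_def Bmq by (auto intro: add_pos_nonneg less_imp_le)
  qed
  have A1pd: "pos_def A1"
    unfolding pos_def_def
  proof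
    show "transpose A1 = A1" unfolding A1_def using sK tsc S1 by (simp add: transpose_add')
    show "\<forall>x. x \<noteq> 0 \<longrightarrow> 0 < x \<bullet> (A1 *v x)"
      using Bpd S1(2) unfolding pos_def_def A1q by (auto intro: add_pos_nonneg)
  qed
  have A2pd: "pos_def A2"
    unfolding pos_def_def
  proof
    show "transpose A2 = A2" unfolding A2_def using sK tsc S2 by (simp add: transpose_add')
    show "\<forall>x. x \<noteq> 0 \<longrightarrow> 0 < x \<bullet> (A2 *v x)"
      using Bpd S2(2) unfolding pos_def_def A2q by (auto intro: add_pos_nonneg)
  qed
  note EB = eig_facts[OF Bpd] and E1 = eig_facts[OF A1pd] and E2 = eig_facts[OF A2pd]
  define Lam where "Lam = lambda_max Bm"
  define mu where "mu = lambda_min Bm"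
  define L1 where "L1 = lambda_max A1"
  define m1 where "m1 = lambda_min A1"
  define L2 where "L2 = lambda_max A2"
  have mu0: "mu > 0" unfolding mu_def by (rule EB(1))
  have Lc: "Lam \<le> c * mu"
    using cond mu0 unfolding cond_num_def Lam_def mu_def Bm_def by (simp add: pos_divide_le_eq mult_ac)
  have m1ge: "mu \<le> m1"
  proof -
    obtain w where w: "norm w = 1" "m1 = w \<bullet> (A1 *v w)" using E1(7) unfolding m1_def by blast
    have ww: "w \<bullet> w = 1" using w(1) by (simp add: dot_square_norm)
    have "mu \<le> w \<bullet> (Bm *v w)" using EB(5)[of w] ww unfolding mu_def by simp
    also have "\<dots> \<le> m1" unfolding w(2) A1q using S1(2)[of w] by simp
    finally show ?thesis .
  qed
  have L2le: "L2 \<le> (1 + e2) * Lam"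
  proof -
    obtain v where v: "norm v = 1" "L2 = v \<bullet> (A2 *v v)" using E2(6) unfolding L2_def by blast
    have vv: "v \<bullet> v = 1" using v(1) by (simp add: dot_square_norm)
    have h1: "v \<bullet> (S2 *v v) \<le> e2 * (v \<bullet> (K *v v))" unfolding e2_def by (rule eta_bound[OF K_pd])
    have h2: "v \<bullet> (Bm *v v) \<le> Lam" using EB(4)[of v] vv unfolding Lam_def by simp
    have h3: "v \<bullet> (Bm *v v) = v \<bullet> (K *v v) + \<sigma>" using Bmq[of v] vv by simp
    have "L2 \<le> v \<bullet> (Bm *v v) + e2 * (v \<bullet> (K *v v))" unfolding v(2) A2q using h1 by simp
    also have "\<dots> \<le> v \<bullet> (Bm *v v) + e2 * (v \<bullet> (Bm *v v))"
      using h3 e0 sigma_pos by (simp add: mult_left_mono)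
    also have "\<dots> = (1 + e2) * (v \<bullet> (Bm *v v))" by (simp add: algebra_simps)
    also have "\<dots> \<le> (1 + e2) * Lam" using h2 e0 by (simp add: mult_left_mono)
    finally show ?thesis .
  qed
  have key: "L2^2 \<le> (c / (1 - e1)^2 * (c / (1 - e2)^2)) * L1 * m1"
  proof (rule key_ineq)
    show "0 \<le> e1" "e1 < 1" "0 \<le> e2" "e2 < 1" using e0 eta1 eta2 unfolding e1_def e2_def by auto
    show "0 < mu" "mu \<le> m1" "L2 \<le> (1 + e2) * Lam" "Lam \<le> c * mu" by fact+
    show "m1 \<le> L1" unfolding m1_def L1_def by (rule E1(8))
    show "0 < L2" unfolding L2_def using E2(1) E2(8) by linarith
  qed
  have inv1: "invertible (K + S1 + \<sigma> *\<^sub>R mat 1)" using pd_invertible[OF A1pd] unfolding A1_def .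
  have inv2: "invertible (K + S2 + \<sigma> *\<^sub>R mat 1)" using pd_invertible[OF A2pd] unfolding A2_def .
  define u1 where "u1 = matrix_inv (K + S1 + \<sigma> *\<^sub>R mat 1) *v Y"
  define u2 where "u2 = matrix_inv (K + S2 + \<sigma> *\<^sub>R mat 1) *v Y"
  have R1: "residual (K + S1) \<sigma> Y = \<sigma>^2 * (norm u1)^2" and Au1: "A1 *v u1 = Y"
    using residual_eq[OF inv1] unfolding u1_def A1_def by auto
  have R2: "residual (K + S2) \<sigma> Y = \<sigma>^2 * (norm u2)^2" and Au2: "A2 *v u2 = Y"
    using residual_eq[OF inv2] unfolding u2_def A2_def by auto
  have u2nz: "norm u2 > 0" using Au2 Y_nz by auto
  have "residual (K + S1) \<sigma> Y / residual (K + S2) \<sigma> Y = (norm u1 / norm u2)^2"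
    unfolding R1 R2 using sigma_pos by (simp add: power_divide)
  then have sq: "sqrt (residual (K + S1) \<sigma> Y / residual (K + S2) \<sigma> Y) = norm u1 / norm u2" by simp
  have b1: "m1 * norm u1 \<le> norm Y" using E1(3)[of u1] Au1 unfolding m1_def by simp
  have b2: "norm Y \<le> L2 * norm u2" using E2(2)[of u2] Au2 unfolding L2_def by simp
  have m1pos: "m1 > 0" using mu0 m1ge by linarith
  have L2pos: "L2 > 0" unfolding L2_def using E2(1) E2(8) by linarith
  have "norm u1 / norm u2 * L2 \<le> L2^2 / m1"
  proof -
    have "norm u1 \<le> L2 * norm u2 / m1" using b1 b2 m1pos by (simp add: pos_le_divide_eq mult_ac)
    then have "norm u1 / norm u2 \<le> L2 / m1" using u2nz m1pos by (simp add: divide_le_eq field_simps)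
    then have "norm u1 / norm u2 * L2 \<le> L2 / m1 * L2" using L2pos by (intro mult_right_mono) auto
    also have "L2 / m1 * L2 = L2^2 / m1" by (simp add: power2_eq_square)
    finally show ?thesis .
  qed
  also have "\<dots> \<le> (c / (1 - e1)^2 * (c / (1 - e2)^2)) * L1"
    using key m1pos by (simp add: divide_le_eq mult_ac)
  finally have main: "norm u1 / norm u2 * L2 \<le> (c / (1 - e1)^2 * (c / (1 - e2)^2)) * L1" .
  have u1nz: "norm u1 > 0" using Au1 Y_nz by auto
  have "norm u1 / norm u2 > 0" using u1nz u2nz by simp
  moreover have "L1 > 0" using m1pos E1(8) unfolding m1_def L1_def by linarith
  ultimately show ?thesis using main L2pos unfolding sq L2_def L1_def A1_def A2_def e1_def e2_def by blast
qed


theorem corollary1: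
  fixes J :: "real^'p^'n" and J1 :: "real^'q1^'n" and J2 :: "real^'q2^'n"
    and K S1 S2 :: "real^'n^'n" and \<sigma> c :: real and Y :: "real^'n"
  assumes K_def: "K = J ** transpose J"
    and K_pd: "pos_def K"
    and S1_def: "S1 = J1 ** transpose J1"
    and S2_def: "S2 = J2 ** transpose J2"
    and sigma_pos: "\<sigma> > 0"
    and Y_nz: "Y \<noteq> 0"
    and eta1: "spec_norm (inv_sqrt K ** S1 ** inv_sqrt K) < 1"
    and eta2: "spec_norm (inv_sqrt K ** S2 ** inv_sqrt K) < 1"
    and cond: "cond_num (K + \<sigma> *\<^sub>R mat 1) \<le> c"
  shows
    "let \<eta>1 = spec_norm (inv_sqrt K ** S1 ** inv_sqrt K);
         \<eta>2 = spec_norm (inv_sqrt K ** S2 ** inv_sqrt K);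
         a1 = c / (1 - \<eta>1)\<^sup>2; a2 = c / (1 - \<eta>2)\<^sup>2; b = a1 * a2;
         R1 = residual (K + S1) \<sigma> Y; R2 = residual (K + S2) \<sigma> Y;
         L1 = lambda_max (K + S1 + \<sigma> *\<^sub>R mat 1);
         L2 = lambda_max (K + S2 + \<sigma> *\<^sub>R mat 1)
     in L1 / (b * L2) \<le> sqrt (R1 / R2) \<and> sqrt (R1 / R2) \<le> b * L1 / L2"
proof -
  note P1 = gram_psd[where J=J1, folded S1_def] and P2 = gram_psd[where J=J2, folded S2_def]
  define e1 where "e1 = spec_norm (inv_sqrt K ** S1 ** inv_sqrt K)"
  define e2 where "e2 = spec_norm (inv_sqrt K ** S2 ** inv_sqrt K)"
  define b where "b = c / (1 - e1)\<^sup>2 * (c / (1 - e2)\<^sup>2)"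
  define R1 where "R1 = residual (K + S1) \<sigma> Y"
  define R2 where "R2 = residual (K + S2) \<sigma> Y"
  define L1 where "L1 = lambda_max (K + S1 + \<sigma> *\<^sub>R mat 1)"
  define L2 where "L2 = lambda_max (K + S2 + \<sigma> *\<^sub>R mat 1)"
  have U: "sqrt (R1 / R2) * L2 \<le> b * L1" "sqrt (R1 / R2) > 0" "L1 > 0" "L2 > 0"
    using one_side[OF K_pd P1 P2 sigma_pos Y_nz eta1 eta2 cond]
    unfolding e1_def e2_def b_def R1_def R2_def L1_def L2_def by auto
  have D: "sqrt (R2 / R1) * L1 \<le> b * L2" "sqrt (R2 / R1) > 0"
    using one_side[OF K_pd P2 P1 sigma_pos Y_nz eta2 eta1 cond]
    unfolding e1_def e2_def b_def R1_def R2_def L1_def L2_def by (auto simp: mult_ac)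
  define s where "s = sqrt (R1 / R2)"
  have s0: "s > 0" using U(2) unfolding s_def .
  have inv: "sqrt (R2 / R1) = 1 / s" unfolding s_def by (simp add: real_sqrt_divide)
  have up: "s \<le> b * L1 / L2" using U(1) U(4) unfolding s_def[symmetric] by (simp add: pos_le_divide_eq)
  have "L1 \<le> b * L2 * s" using D(1) s0 unfolding inv by (simp add: pos_divide_le_eq mult_ac)
  moreover have "b * L2 > 0"
  proof -
    have "b * L2 * s > 0" using \<open>L1 \<le> b * L2 * s\<close> U(3) by linarith
    then show ?thesis using s0 by (simp add: zero_less_mult_iff)
  qed
  ultimately have low: "L1 / (b * L2) \<le> s" by (simp add: pos_divide_le_eq mult_ac)
  show ?thesis unfolding Let_def
    using low up unfolding s_def e1_def e2_def b_def R1_def R2_def L1_def L2_def by blast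
qed


end
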